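(* Assume the L-smoothness assumption and the $\mu$-convexity assumption with $\mu>0$, let $x^\star$ be the minimizer of $f$, suppose $\sigma_f^2=0$ (interpolation), and let $c\ge4\tau^2$, $\gamma_b>0$. Then with $\alpha:=\min\{\frac1{2cL},\gamma_b\}$, for every $T\ge1$ the FedSPS iterates satisfy $$\mathbb E\|\bar x_T-x^\star\|^2\le \frac{1}{\mu\alpha}(1-\mu\alpha)^T\|\bar x_0-x^\star\|^2.$$
   Context: Setting: integers $n\ge1$, $d\ge1$, $\tau\ge1$. For each $i\in[n]$, $\mathcal D_i$ is a probability distribution on $\Omega_i$, $F_i:\mathbb R^d\times\Omega_i\to\mathbb R$ with $F_i(\cdot,\xi)$ differentiable for $\xi\in\operatorname{supp}(\mathcal D_i)$; $f_i(x):=\mathbb E_{\xi\sim\mathcal D_i}F_i(x,\xi)$, $\mathbb E\nabla F_i(x,\xi)=\nabla f_i(x)$, $f:=\frac1n\sum_i f_i$. $F_i^\star:=\inf_{\xi\in\operatorname{supp}(\mathcal D_i),x}F_i(x,\xi)$ and $\ell_i^\star\le F_i^\star$ are given reals. FedSPS with parameters $c,\gamma_b>0$: $x_0^i=x_0$; at each $t$, client $i$ draws $\xi_t^i\sim\mathcal D_i$ independently of everything else, sets $g_t^i:=\nabla F_i(x_t^i,\xi_t^i)$, $\gamma_t^i:=\min\{\frac{F_i(x_t^i,\xi_t^i)-\ell_i^\star}{c\|g_t^i\|^2},\gamma_b\}$ (first term $+\infty$ if $g_t^i=0$); if $t+1$ is a multiple of $\tau$, $x_{t+1}^i:=\frac1n\sum_j(x_t^j-\gamma_t^jg_t^j)$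 for all $i$, else $x_{t+1}^i:=x_t^i-\gamma_t^ig_t^i$. $\bar x_t:=\frac1n\sum_i x_t^i$. L-smoothness assumption: $\|\nabla F_i(y,\xi)-\nabla F_i(x,\xi)\|\le L\|x-y\|$ for all $i$, $\xi\in\operatorname{supp}(\mathcal D_i)$, $x,y$. $\mu$-convexity assumption: $F_i(y,\xi)\ge F_i(x,\xi)+\langle\nabla F_i(x,\xi),y-x\rangle+\frac\mu2\|y-x\|^2$ for all $i,\xi,x,y$. $\sigma_f^2:=\frac1n\sum_i(f_i(x^\star)-\ell_i^\star)$. *)

theory Defs
  imports "HOL-Probability.Probability"
begin

text \<open>A sample path
  \<omega> :: nat \<times> nat \<Rightarrow> 'w assigns to (t,i) the sample \<xi>_t^i.
  F i x \<xi> is the loss F_i(x,\<xi>), G i x \<xi> its gradient in x, lstar i = \<ell>_i^*.\<close>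

definition fedsps_stepsize ::
  "(nat \<Rightarrow> 'a::real_inner \<Rightarrow> 'w \<Rightarrow> real) \<Rightarrow> (nat \<Rightarrow> 'a \<Rightarrow> 'w \<Rightarrow> 'a) \<Rightarrow> (nat \<Rightarrow> real)
    \<Rightarrow> real \<Rightarrow> real \<Rightarrow> nat \<Rightarrow> 'a \<Rightarrow> 'w \<Rightarrow> real" where
  "fedsps_stepsize F G lstar c gb i x \<xi> =
     (if G i x \<xi> = 0 then gb
      else min ((F i x \<xi> - lstar i) / (c * (norm (G i x \<xi>))\<^sup>2)) gb)"

fun fedsps_iter ::
  "nat \<Rightarrow> nat \<Rightarrow> (nat \<Rightarrow> 'a::real_inner \<Rightarrow> 'w \<Rightarrow> real) \<Rightarrow> (nat \<Rightarrow> 'a \<Rightarrow> 'w \<Rightarrow> 'a) \<Rightarrow> (nat \<Rightarrow> real)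
    \<Rightarrow> real \<Rightarrow> real \<Rightarrow> 'a \<Rightarrow> (nat \<times> nat \<Rightarrow> 'w) \<Rightarrow> nat \<Rightarrow> nat \<Rightarrow> 'a" where
  "fedsps_iter n \<tau> F G lstar c gb x0 \<omega> 0 = (\<lambda>i. x0)"
| "fedsps_iter n \<tau> F G lstar c gb x0 \<omega> (Suc t) =
     (let X = fedsps_iter n \<tau> F G lstar c gb x0 \<omega> t;
          u = (\<lambda>j. X j - fedsps_stepsize F G lstar c gb j (X j) (\<omega> (t, j)) *\<^sub>R G j (X j) (\<omega> (t, j)))
      in if Suc t mod \<tau> = 0 then (\<lambda>i. (1 / real n) *\<^sub>R (\<Sum>j<n. u j)) else u)"

definition fedsps_avg ::
  "nat \<Rightarrow> nat \<Rightarrow> (nat \<Rightarrow> 'a::real_inner \<Rightarrow> 'w \<Rightarrow> real) \<Rightarrow> (nat \<Rightarrow> 'a \<Rightarrow> 'w \<Rightarrow> 'a) \<Rightarrow> (nat \<Rightarrow> real)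
    \<Rightarrow> real \<Rightarrow> real \<Rightarrow> 'a \<Rightarrow> (nat \<times> nat \<Rightarrow> 'w) \<Rightarrow> nat \<Rightarrow> 'a" where
  "fedsps_avg n \<tau> F G lstar c gb x0 \<omega> t =
     (1 / real n) *\<^sub>R (\<Sum>i<n. fedsps_iter n \<tau> F G lstar c gb x0 \<omega> t i)"

end

theory Submission
  imports Defs
begin

lemma descent:
  fixes Fx :: "'a::euclidean_space \<Rightarrow> real" and Gx :: "'a \<Rightarrow> 'a"
  assumes der: "\<And>x. (Fx has_derivative (\<lambda>h. Gx x \<bullet> h)) (at x)"
    and sm: "\<And>x y. norm (Gx y - Gx x) \<le> L * norm (x - y)"
  shows "Fx (x + h) \<le> Fx x + Gx x \<bullet> h + L / 2 * (norm h)\<^sup>2"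
proof -
  define \<phi> where "\<phi> s = Fx (x + s *\<^sub>R h) - s * (Gx x \<bullet> h) - L / 2 * s\<^sup>2 * (norm h)\<^sup>2" for s :: real
  have D: "DERIV \<phi> s :> (Gx (x + s *\<^sub>R h) \<bullet> h - Gx x \<bullet> h - L * s * (norm h)\<^sup>2)" for s
  proof -
    have i: "((\<lambda>s. x + s *\<^sub>R h) has_derivative (\<lambda>d. d *\<^sub>R h)) (at s)"
      by (auto intro!: derivative_eq_intros)
    have "((\<lambda>s. Fx (x + s *\<^sub>R h)) has_derivative (\<lambda>d. Gx (x + s *\<^sub>R h) \<bullet> (d *\<^sub>R h))) (at s)"
      by (rule has_derivative_compose[OF i der])
    hence "((\<lambda>s. Fx (x + s *\<^sub>R h)) has_field_derivative (Gx (x + s *\<^sub>R h) \<bullet> h)) (at s)"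
      unfolding has_field_derivative_def
      by (rule has_derivative_eq_rhs) (auto simp: fun_eq_iff)
    then show ?thesis unfolding \<phi>_def
      by (auto intro!: derivative_eq_intros simp: power2_eq_square)
  qed
  have "\<phi> 0 \<ge> \<phi> 1"
  proof (rule DERIV_nonpos_imp_nonincreasing[of 0 1])
    fix s :: real assume s: "0 \<le> s" "s \<le> 1"
    have "Gx (x + s *\<^sub>R h) \<bullet> h - Gx x \<bullet> h = (Gx (x + s *\<^sub>R h) - Gx x) \<bullet> h"
      by (simp add: inner_diff_left)
    also have "\<dots> \<le> norm (Gx (x + s *\<^sub>R h) - Gx x) * norm h" by (rule norm_cauchy_schwarz)
    also have "\<dots> \<le> L * norm (x - (x + s *\<^sub>R h)) * norm h"
      by (rule mult_right_mono[OF sm]) simp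
    also have "\<dots> = L * s * (norm h)\<^sup>2" using s by (simp add: power2_eq_square)
    finally show "\<exists>y. DERIV \<phi> s :> y \<and> y \<le> 0" using D by (intro exI[of _ _]) (auto intro!: exI)
  qed simp
  then show ?thesis unfolding \<phi>_def by simp
qed

lemma step_contract:
  fixes Fx :: "'a::euclidean_space \<Rightarrow> real" and Gx :: "'a \<Rightarrow> 'a"
  assumes der: "\<And>x. (Fx has_derivative (\<lambda>h. Gx x \<bullet> h)) (at x)"
    and sm: "\<And>x y. norm (Gx y - Gx x) \<le> L * norm (x - y)"
    and cv: "\<And>x y. Fx y \<ge> Fx x + Gx x \<bullet> (y - x) + \<mu> / 2 * (norm (y - x))\<^sup>2"
    and lo: "\<And>x. ls \<le> Fx x" and opt: "Fx xs = ls"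
    and mu: "\<mu> > 0" and L: "L > 0" and c: "c \<ge> 1" and gb: "gb > 0"
  shows "(norm (x - (if Gx x = 0 then gb else min ((Fx x - ls) / (c * (norm (Gx x))\<^sup>2)) gb) *\<^sub>R Gx x - xs))\<^sup>2
         \<le> (1 - \<mu> * min (1 / (2 * c * L)) gb) * (norm (x - xs))\<^sup>2"
proof -
  define g where "g = Gx x"
  define \<Delta> where "\<Delta> = Fx x - ls"
  define r where "r = (norm (x - xs))\<^sup>2"
  define \<alpha> where "\<alpha> = min (1 / (2 * c * L)) gb"
  have r0: "r \<ge> 0" unfolding r_def by simp
  have D0: "\<Delta> \<ge> 0" using lo[of x] unfolding \<Delta>_def by simp
  have a: "g \<bullet> (x - xs) \<ge> \<Delta> + \<mu> / 2 * r"
  proof -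
    have e1: "g \<bullet> (xs - x) = - (g \<bullet> (x - xs))" by (simp add: inner_diff_right)
    have e2: "norm (xs - x) = norm (x - xs)" by (rule norm_minus_commute)
    have "Fx x + g \<bullet> (xs - x) + \<mu> / 2 * (norm (xs - x))\<^sup>2 \<le> Fx xs" using cv[of x xs] unfolding g_def .
    then have "Fx x - g \<bullet> (x - xs) + \<mu> / 2 * r \<le> ls" unfolding e1 e2 r_def opt by simp
    then show ?thesis unfolding \<Delta>_def by linarith
  qed
  have al0: "\<alpha> > 0" unfolding \<alpha>_def using L c gb by auto
  have mual: "\<mu> * \<alpha> \<le> 1"
  proof -
    have "\<mu> \<le> L"
    proof -
      obtain h :: 'a where h: "h \<noteq> 0" using SOME_Basis nonzero_Basis by blast
      have "Fx (x + h) \<le> Fx x + g \<bullet> h + L / 2 * (norm h)\<^sup>2" unfolding g_def by (rule descent[OF der sm])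
      moreover have "Fx (x + h) \<ge> Fx x + g \<bullet> h + \<mu> / 2 * (norm h)\<^sup>2" using cv[of x "x + h"] unfolding g_def by simp
      ultimately have "\<mu> / 2 * (norm h)\<^sup>2 \<le> L / 2 * (norm h)\<^sup>2" by simp
      moreover have "(norm h)\<^sup>2 > 0" using h by simp
      ultimately show ?thesis by simp
    qed
    moreover have "\<alpha> \<le> 1 / (2 * c * L)" unfolding \<alpha>_def by simp
    moreover have "1 / (2 * c * L) \<le> 1 / L" using c L by (simp add: field_simps)
    ultimately have "\<mu> * \<alpha> \<le> L * (1 / L)" using mu al0 by (intro mult_mono) auto
    then show ?thesis using L by simp
  qed
  show ?thesis
  proof (cases "g = 0")
    case True
    then have "\<mu> / 2 * r \<le> 0" using a D0 by simp
    then have "r = 0" using mu r0 by (simp add: mult_le_0_iff)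
    then have "x = xs" unfolding r_def by simp
    then show ?thesis using True unfolding g_def by simp
  next
    case False
    have gn: "(norm g)\<^sup>2 > 0" using False by simp
    have desc: "\<Delta> \<ge> (norm g)\<^sup>2 / (2 * L)"
    proof -
      have "Fx (x + (- (1 / L)) *\<^sub>R g) \<le> Fx x + g \<bullet> ((- (1 / L)) *\<^sub>R g) + L / 2 * (norm ((- (1 / L)) *\<^sub>R g))\<^sup>2"
        unfolding g_def by (rule descent[OF der sm])
      also have "\<dots> = Fx x - (norm g)\<^sup>2 / (2 * L)"
      proof -
        have "g \<bullet> ((- (1 / L)) *\<^sub>R g) = - ((norm g)\<^sup>2 / L)" by (simp add: power2_norm_eq_inner)
        moreover have "(norm ((- (1 / L)) *\<^sub>R g))\<^sup>2 = (norm g)\<^sup>2 / L\<^sup>2" using L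
          by (simp add: power_mult_distrib power_divide)
        ultimately show ?thesis using L by (simp add: power2_eq_square field_simps)
      qed
      finally show ?thesis using lo[of "x + (- (1 / L)) *\<^sub>R g"] unfolding \<Delta>_def by simp
    qed
    define \<gamma> where "\<gamma> = min (\<Delta> / (c * (norm g)\<^sup>2)) gb"
    have "1 / (2 * c * L) \<le> \<Delta> / (c * (norm g)\<^sup>2)"
    proof -
      have "1 / (2 * c * L) = ((norm g)\<^sup>2 / (2 * L)) / (c * (norm g)\<^sup>2)" using gn c L by (simp add: field_simps)
      also have "\<dots> \<le> \<Delta> / (c * (norm g)\<^sup>2)" using desc gn c by (intro divide_right_mono) auto
      finally show ?thesis .
    qed
    then have ga: "\<alpha> \<le> \<gamma>" unfolding \<alpha>_def \<gamma>_def by auto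
    have g0: "\<gamma> > 0" using ga al0 by simp
    have gc: "\<gamma> * c * (norm g)\<^sup>2 \<le> \<Delta>"
    proof -
      have "\<gamma> \<le> \<Delta> / (c * (norm g)\<^sup>2)" unfolding \<gamma>_def by simp
      then show ?thesis using gn c by (simp add: field_simps)
    qed
    have gg: "\<gamma>\<^sup>2 * (norm g)\<^sup>2 \<le> \<gamma> * \<Delta>"
    proof -
      have "\<gamma> * (norm g)\<^sup>2 \<le> \<gamma> * c * (norm g)\<^sup>2" using c g0 gn by simp
      then have "\<gamma> * (norm g)\<^sup>2 \<le> \<Delta>" using gc by linarith
      then have "\<gamma> * (\<gamma> * (norm g)\<^sup>2) \<le> \<gamma> * \<Delta>" using g0 by (intro mult_left_mono) auto
      then show ?thesis by (simp add: power2_eq_square algebra_simps)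
    qed
    have exp: "(norm (x - \<gamma> *\<^sub>R g - xs))\<^sup>2 = r - 2 * \<gamma> * (g \<bullet> (x - xs)) + \<gamma>\<^sup>2 * (norm g)\<^sup>2"
    proof -
      have "x - \<gamma> *\<^sub>R g - xs = (x - xs) - \<gamma> *\<^sub>R g" by simp
      then show ?thesis unfolding r_def
        by (simp only: power2_norm_eq_inner inner_diff_left inner_diff_right inner_scaleR_left inner_scaleR_right)
           (simp add: inner_commute power2_eq_square algebra_simps)
    qed
    have "2 * \<gamma> * (\<Delta> + \<mu> / 2 * r) \<le> 2 * \<gamma> * (g \<bullet> (x - xs))" using a g0 by simp
    then have "(norm (x - \<gamma> *\<^sub>R g - xs))\<^sup>2 \<le> r - \<gamma> * \<mu> * r - \<gamma> * \<Delta>"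
      using exp gg by (simp add: algebra_simps)
    also have "\<dots> \<le> (1 - \<mu> * \<alpha>) * r"
    proof -
      have "\<mu> * \<alpha> * r \<le> \<mu> * \<gamma> * r" using ga mu r0 by (intro mult_right_mono mult_left_mono) auto
      moreover have "\<gamma> * \<Delta> \<ge> 0" using g0 D0 by simp
      ultimately show ?thesis by (simp add: algebra_simps)
    qed
    finally show ?thesis using False unfolding \<gamma>_def g_def \<Delta>_def r_def \<alpha>_def by simp
  qed
qed


lemma avg_bound:
  fixes u :: "nat \<Rightarrow> 'a::real_normed_vector"
  assumes n: "n \<ge> 1" and B: "\<And>j. j < n \<Longrightarrow> (norm (u j - xs))\<^sup>2 \<le> b"
  shows "(norm ((1 / real n) *\<^sub>R (\<Sum>j<n. u j) - xs))\<^sup>2 \<le> b"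
proof -
  have nb: "norm (u j - xs) \<le> sqrt b" if "j < n" for j
    using B[OF that] real_le_rsqrt by blast
  have "(1 / real n) *\<^sub>R (\<Sum>j<n. u j) - xs = (1 / real n) *\<^sub>R (\<Sum>j<n. u j - xs)"
    using n by (simp add: sum_subtractf scaleR_diff_right scaleR_scaleR sum_constant_scaleR)
  then have "norm ((1 / real n) *\<^sub>R (\<Sum>j<n. u j) - xs) = (1 / real n) * norm (\<Sum>j<n. u j - xs)"
    by simp
  also have "\<dots> \<le> (1 / real n) * (\<Sum>j<n. norm (u j - xs))"
    by (intro mult_left_mono norm_sum) auto
  also have "\<dots> \<le> (1 / real n) * (\<Sum>j<n. sqrt b)"
    by (intro mult_left_mono sum_mono nb) auto
  also have "\<dots> = sqrt b" using n by simp
  finally have "norm ((1 / real n) *\<^sub>R (\<Sum>j<n. u j) - xs) \<le> sqrt b" .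
  moreover have "b \<ge> 0" using B[of 0] n by (meson order_trans zero_le_power2 less_le_trans zero_less_one)
  ultimately show ?thesis
    by (metis norm_ge_zero power_mono real_sqrt_pow2)
qed

lemma iter_bound:
  assumes n: "n \<ge> 1" and q: "q \<ge> 0"
    and hyp: "\<And>t j x. t < T \<Longrightarrow> j < n \<Longrightarrow>
       (norm (x - fedsps_stepsize F G lstar c gb j x (\<omega> (t, j)) *\<^sub>R G j x (\<omega> (t, j)) - xs))\<^sup>2
         \<le> q * (norm (x - xs))\<^sup>2"
  shows "t \<le> T \<Longrightarrow> i < n \<Longrightarrow>
     (norm (fedsps_iter n \<tau> F G lstar c gb x0 \<omega> t i - xs))\<^sup>2 \<le> q ^ t * (norm (x0 - xs))\<^sup>2"
proof (induction t arbitrary: i)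
  case 0
  then show ?case by simp
next
  case (Suc t)
  define X where "X = fedsps_iter n \<tau> F G lstar c gb x0 \<omega> t"
  define u where "u = (\<lambda>j. X j - fedsps_stepsize F G lstar c gb j (X j) (\<omega> (t, j)) *\<^sub>R G j (X j) (\<omega> (t, j)))"
  have ub: "(norm (u j - xs))\<^sup>2 \<le> q ^ Suc t * (norm (x0 - xs))\<^sup>2" if "j < n" for j
  proof -
    have "(norm (u j - xs))\<^sup>2 \<le> q * (norm (X j - xs))\<^sup>2"
      unfolding u_def using hyp[of t j "X j"] Suc.prems that by simp
    also have "\<dots> \<le> q * (q ^ t * (norm (x0 - xs))\<^sup>2)"
      using Suc.IH[of j] Suc.prems that q unfolding X_def by (intro mult_left_mono) auto
    finally show ?thesis by simp
  qed
  have eq: "fedsps_iter n \<tau> F G lstar c gb x0 \<omega> (Suc t) =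
     (if Suc t mod \<tau> = 0 then (\<lambda>i. (1 / real n) *\<^sub>R (\<Sum>j<n. u j)) else u)"
    unfolding u_def X_def by (simp add: Let_def)
  show ?case
  proof (cases "Suc t mod \<tau> = 0")
    case True
    then show ?thesis unfolding eq using avg_bound[OF n ub] by simp
  next
    case False
    then show ?thesis unfolding eq using ub Suc.prems by simp
  qed
qed


lemma mu_le_L:
  fixes Fx :: "'a::euclidean_space \<Rightarrow> real" and Gx :: "'a \<Rightarrow> 'a"
  assumes der: "\<And>x. (Fx has_derivative (\<lambda>h. Gx x \<bullet> h)) (at x)"
    and sm: "\<And>x y. norm (Gx y - Gx x) \<le> L * norm (x - y)"
    and cv: "\<And>x y. Fx y \<ge> Fx x + Gx x \<bullet> (y - x) + \<mu> / 2 * (norm (y - x))\<^sup>2"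
  shows "\<mu> \<le> L"
proof -
  obtain h :: 'a where h: "h \<noteq> 0" using SOME_Basis nonzero_Basis by blast
  have "Fx (0 + h) \<le> Fx 0 + Gx 0 \<bullet> h + L / 2 * (norm h)\<^sup>2" by (rule descent[OF der sm])
  moreover have "Fx (0 + h) \<ge> Fx 0 + Gx 0 \<bullet> h + \<mu> / 2 * (norm h)\<^sup>2" using cv[of 0 "0 + h"] by simp
  ultimately have "\<mu> / 2 * (norm h)\<^sup>2 \<le> L / 2 * (norm h)\<^sup>2" by simp
  moreover have "(norm h)\<^sup>2 > 0" using h by simp
  ultimately show ?thesis by simp
qed

theorem corollary1:
  fixes n \<tau> T :: nat
    and D :: "nat \<Rightarrow> 'w measure"
    and F :: "nat \<Rightarrow> 'a::euclidean_space \<Rightarrow> 'w \<Rightarrow> real"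
    and G :: "nat \<Rightarrow> 'a \<Rightarrow> 'w \<Rightarrow> 'a"
    and lstar :: "nat \<Rightarrow> real"
    and L \<mu> c gb :: real
    and x0 xstar :: 'a
  assumes n: "n \<ge> 1" and tau: "\<tau> \<ge> 1" and T: "T \<ge> 1"
    and prob: "\<And>i. i < n \<Longrightarrow> prob_space (D i)"
    and grad: "\<And>i x \<xi>. i < n \<Longrightarrow> \<xi> \<in> space (D i) \<Longrightarrow>
                 ((\<lambda>y. F i y \<xi>) has_derivative (\<lambda>h. G i x \<xi> \<bullet> h)) (at x)"
    and intF: "\<And>i x. i < n \<Longrightarrow> integrable (D i) (\<lambda>\<xi>. F i x \<xi>)"
    and intG: "\<And>i x. i < n \<Longrightarrow> integrable (D i) (\<lambda>\<xi>. G i x \<xi>)"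
    and unbiased: "\<And>i x. i < n \<Longrightarrow>
        ((\<lambda>y. integral\<^sup>L (D i) (\<lambda>\<xi>. F i y \<xi>)) has_derivative
           (\<lambda>h. integral\<^sup>L (D i) (\<lambda>\<xi>. G i x \<xi>) \<bullet> h)) (at x)"
    and lstar_le: "\<And>i x \<xi>. i < n \<Longrightarrow> \<xi> \<in> space (D i) \<Longrightarrow> lstar i \<le> F i x \<xi>"
    and smooth: "\<And>i x y \<xi>. i < n \<Longrightarrow> \<xi> \<in> space (D i) \<Longrightarrow>
                   norm (G i y \<xi> - G i x \<xi>) \<le> L * norm (x - y)"
    and strconv: "\<And>i x y \<xi>. i < n \<Longrightarrow> \<xi> \<in> space (D i) \<Longrightarrow>
                   F i y \<xi> \<ge> F i x \<xi> + G i x \<xi> \<bullet> (y - x) + \<mu> / 2 * (norm (y - x))\<^sup>2"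
    and mu: "\<mu> > 0"
    and minimizer: "\<And>y. (1 / real n) * (\<Sum>i<n. integral\<^sup>L (D i) (\<lambda>\<xi>. F i xstar \<xi>))
                        \<le> (1 / real n) * (\<Sum>i<n. integral\<^sup>L (D i) (\<lambda>\<xi>. F i y \<xi>))"
    and interp: "(1 / real n) * (\<Sum>i<n. integral\<^sup>L (D i) (\<lambda>\<xi>. F i xstar \<xi>) - lstar i) = 0"
    and c: "c \<ge> 4 * (real \<tau>)\<^sup>2"
    and gb: "gb > 0"
  shows "let \<alpha> = min (1 / (2 * c * L)) gb in
         (\<integral>\<^sup>+ \<omega>. ennreal ((norm (fedsps_avg n \<tau> F G lstar c gb x0 \<omega> T - xstar))\<^sup>2)
            \<partial>(PiM ({..<T} \<times> {..<n}) (\<lambda>(t, i). D i)))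
         \<le> ennreal (1 / (\<mu> * \<alpha>) * (1 - \<mu> * \<alpha>) ^ T *
                    (norm (x0 - xstar))\<^sup>2)"
proof -
  define \<alpha> where "\<alpha> = min (1 / (2 * c * L)) gb"
  define M where "M = PiM ({..<T} \<times> {..<n}) (\<lambda>(t, i). D i)"
  define R where "R = (norm (x0 - xstar))\<^sup>2"
  have c4: "c \<ge> 4"
  proof -
    have "(real \<tau>)\<^sup>2 \<ge> 1" using tau by simp
    then show ?thesis using c by linarith
  qed
  have n0: "0 < n" using n by simp
  obtain \<xi>0 where \<xi>0: "\<xi>0 \<in> space (D 0)" using prob_space.not_empty[OF prob[OF n0]] by blast
  have muL: "\<mu> \<le> L"
    by (rule mu_le_L[OF grad[OF n0 \<xi>0] smooth[OF n0 \<xi>0] strconv[OF n0 \<xi>0]])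
  have L0: "L > 0" using muL mu by simp
  have al0: "\<alpha> > 0" unfolding \<alpha>_def using L0 c4 gb by auto
  have mual: "\<mu> * \<alpha> \<le> 1"
  proof -
    have "\<alpha> \<le> 1 / (2 * c * L)" unfolding \<alpha>_def by simp
    moreover have "1 / (2 * c * L) \<le> 1 / L" using c4 L0 by (simp add: field_simps)
    ultimately have "\<mu> * \<alpha> \<le> L * (1 / L)" using mu al0 muL by (intro mult_mono) auto
    then show ?thesis using L0 by simp
  qed
  define q where "q = 1 - \<mu> * \<alpha>"
  have q0: "q \<ge> 0" unfolding q_def using mual by simp
  have aei: "AE \<xi> in D i. F i xstar \<xi> = lstar i" if i: "i < n" for i
  proof -
    interpret P: prob_space "D i" using prob[OF i] .
    have nonneg: "\<And>j. j < n \<Longrightarrow> integral\<^sup>L (D j) (\<lambda>\<xi>. F j xstar \<xi>) - lstar j \<ge> 0"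
    proof -
      fix j assume j: "j < n"
      interpret Pj: prob_space "D j" using prob[OF j] .
      have "integral\<^sup>L (D j) (\<lambda>\<xi>. lstar j) \<le> integral\<^sup>L (D j) (\<lambda>\<xi>. F j xstar \<xi>)"
        using intF[OF j] lstar_le[OF j] by (intro integral_mono) auto
      then show "integral\<^sup>L (D j) (\<lambda>\<xi>. F j xstar \<xi>) - lstar j \<ge> 0"
        by (simp add: Pj.prob_space)
    qed
    have "(\<Sum>i<n. integral\<^sup>L (D i) (\<lambda>\<xi>. F i xstar \<xi>) - lstar i) = 0"
      using interp n0 by simp
    then have "integral\<^sup>L (D i) (\<lambda>\<xi>. F i xstar \<xi>) - lstar i = 0"
      using sum_nonneg_eq_0_iff[of "{..<n}" "\<lambda>i. integral\<^sup>L (D i) (\<lambda>\<xi>. F i xstar \<xi>) - lstar i"]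
        nonneg i by auto
    moreover have "integral\<^sup>L (D i) (\<lambda>\<xi>. F i xstar \<xi> - lstar i) =
        integral\<^sup>L (D i) (\<lambda>\<xi>. F i xstar \<xi>) - lstar i"
      using intF[OF i] by (simp add: P.prob_space)
    ultimately have "integral\<^sup>L (D i) (\<lambda>\<xi>. F i xstar \<xi> - lstar i) = 0" by simp
    moreover have "integrable (D i) (\<lambda>\<xi>. F i xstar \<xi> - lstar i)" using intF[OF i] by auto
    moreover have "AE \<xi> in D i. 0 \<le> F i xstar \<xi> - lstar i" using lstar_le[OF i] by auto
    ultimately have "AE \<xi> in D i. F i xstar \<xi> - lstar i = 0"
      using integral_nonneg_eq_0_iff_AE by blast
    then show ?thesis by auto
  qed
  have probM: "\<And>k. k \<in> {..<T} \<times> {..<n} \<Longrightarrow> prob_space ((\<lambda>(t, i). D i) k)"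
    using prob by auto
  interpret PM: prob_space M unfolding M_def by (rule prob_space_PiM[OF probM])
  have AEM: "AE \<omega> in M. \<forall>k\<in>{..<T} \<times> {..<n}. F (snd k) xstar (\<omega> k) = lstar (snd k)"
  proof (rule AE_finite_allI)
    fix k assume k: "k \<in> {..<T} \<times> {..<n}"
    obtain t j where kk: "k = (t, j)" by force
    have AEk: "AE \<xi> in (\<lambda>(t, i). D i) k. F (snd k) xstar \<xi> = lstar (snd k)"
      using aei[of j] k kk by auto
    show "AE \<omega> in M. F (snd k) xstar (\<omega> k) = lstar (snd k)"
    proof -
      note XX = AE_PiM_component[where M="\<lambda>(t, i). D i" and I="{..<T} \<times> {..<n}" and i=k and
             P="\<lambda>\<xi>. F (snd k) xstar \<xi> = lstar (snd k)", OF probM k AEk]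
      show ?thesis unfolding M_def by (rule XX)
    qed
  qed simp
  have bound: "(norm (fedsps_avg n \<tau> F G lstar c gb x0 \<omega> T - xstar))\<^sup>2 \<le> q ^ T * R"
    if \<omega>: "\<omega> \<in> space M" and good: "\<forall>k\<in>{..<T} \<times> {..<n}. F (snd k) xstar (\<omega> k) = lstar (snd k)" for \<omega>
  proof -
    have sp: "\<omega> (t, j) \<in> space (D j)" if "t < T" "j < n" for t j
      using \<omega> that unfolding M_def by (auto simp: space_PiM)
    have hyp: "(norm (x - fedsps_stepsize F G lstar c gb j x (\<omega> (t, j)) *\<^sub>R G j x (\<omega> (t, j)) - xstar))\<^sup>2
         \<le> q * (norm (x - xstar))\<^sup>2" if tj: "t < T" "j < n" for t j x
    proof -
      have opt: "F j xstar (\<omega> (t, j)) = lstar j" using good tj by auto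
      show ?thesis unfolding fedsps_stepsize_def q_def \<alpha>_def
        by (rule step_contract[OF grad[OF tj(2) sp[OF tj]] smooth[OF tj(2) sp[OF tj]] strconv[OF tj(2) sp[OF tj]]
              lstar_le[OF tj(2) sp[OF tj]] opt mu L0 _ gb]) (use c4 in simp)
    qed
    have "\<And>i. i < n \<Longrightarrow> (norm (fedsps_iter n \<tau> F G lstar c gb x0 \<omega> T i - xstar))\<^sup>2 \<le> q ^ T * R"
      unfolding R_def by (rule iter_bound[OF n q0 hyp]) auto
    then show ?thesis unfolding fedsps_avg_def by (rule avg_bound[OF n])
  qed
  have "(\<integral>\<^sup>+ \<omega>. ennreal ((norm (fedsps_avg n \<tau> F G lstar c gb x0 \<omega> T - xstar))\<^sup>2) \<partial>M)
        \<le> (\<integral>\<^sup>+ \<omega>. ennreal (q ^ T * R) \<partial>M)"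
    using AEM by (intro nn_integral_mono_AE) (auto intro: AE_mp[OF AE_space] simp: bound ennreal_leI)
  also have "\<dots> = ennreal (q ^ T * R)" by (simp add: PM.emeasure_space_1)
  also have "\<dots> \<le> ennreal (1 / (\<mu> * \<alpha>) * q ^ T * R)"
  proof (rule ennreal_leI)
    have "q ^ T * R \<ge> 0" unfolding R_def using q0 by simp
    moreover have "1 / (\<mu> * \<alpha>) \<ge> 1" using mual mu al0 by simp
    ultimately have "1 * (q ^ T * R) \<le> 1 / (\<mu> * \<alpha>) * (q ^ T * R)"
      by (intro mult_right_mono)
    then show "q ^ T * R \<le> 1 / (\<mu> * \<alpha>) * q ^ T * R" by (simp add: mult.assoc)
  qed
  finally show ?thesis unfolding Let_def \<alpha>_def[symmetric] M_def[symmetric] q_def[symmetric] R_def[symmetric] .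
qed

end
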